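(* Let $(d_1,d_2)\in\mathbb N^2$, let $(a,b)\in\mathbb N^2$ be coprime and $k\ge1$ an integer, with $b>0$ and $d_2>0$. If \[ \frac{kab+1}{kb^2}\ge\frac{d_1}{d_2}>\frac ab\qquad\text{or}\qquad\frac{ka^2}{kab+1}\le\frac{d_1}{d_2}<\frac ab, \] then $(d_1,d_2)$ and $(ka,kb)$ satisfy the one-bending property.
   Context: Rank-2 scattering diagram: $\Bbbk$ a field of characteristic $0$, $M=\mathbb Z^2$ with basis $e_1,e_2$, $N=\operatorname{Hom}(M,\mathbb Z)$; positive integers $\ell_1,\ell_2$; independent variables $p_{i,k}$ ($i=1,2$, $1\le k\le\ell_i$); $\mathcal M$ the monoid of monomials in them; $\widehat R$ the completion of $\Bbbk[\mathcal M][x^{\pm1},y^{\pm1}]$ at the ideal generated by the $p_{i,k}$; $x^{(m_1,m_2)}=x^{m_1}y^{m_2}$. Walls: rays $b-\mathbb R_{\ge0}m_0$ or lines $b-\mathbb Rm_0$ ($m_0$ primitive) with functions $1+\sum_{k\ge1}c_kx^{km_0}$, $c_k$ in that ideal; crossing with velocity $v$ acts by $x^m\mapsto x^mf^{\langle n,m\rangle}$ ($n\in N$ primitive orthogonal to the wall, $\langle n,v\rangle<0$); consistency: trivial path-ordered products around regular loops. $\mathfrak D=\operatorname{Scat}(P_1,P_2)$, $P_1=1+\sum_{k=1}^{\ell_1}p_{1,k}x^k$, $P_2=1+\sum_{k=1}^{\ell_2}p_{2,k}y^k$: the consistent diagram (unique up to equivalence) consisting of the lines $(\mathbb Re_1,P_1)$,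 $(\mathbb Re_2,P_2)$ and rays, chosen with rays $\mathbb R_{\le0}(a,b)$ for distinct coprime $(a,b)\in\mathbb Z_{>0}^2$. A broken line for $m_0\in M\setminus\{0\}$ with endpoint $Q$ is a continuous piecewise linear $\beta:(-\infty,0]\to\mathbb R^2$ avoiding ray endpoints and wall intersection points, with breakpoints $\tau_1<\dots<\tau_\ell<0$ and monomials $c_ix^{m_i}$ on the linear pieces, $c_0=1$, $\beta(0)=Q$, $\dot\beta=-m_i$ on the $i$-th piece, transversal crossing at breakpoints, and $c_ix^{m_i}$ a term different from $c_{i-1}x^{m_{i-1}}$ of $c_{i-1}x^{m_{i-1}}\prod_{\mathfrak d\ni\beta(\tau_i)}f_{\mathfrak d}^{\langle n,m_{i-1}\rangle}$ ($n$ primitive normal with $\langle n,m_{i-1}\rangle>0$); it bends at the $\beta(\tau_i)$, its initial exponent is $m_0$ and final exponent $m_\ell$. One-bending property: for $(d_1,d_2)\in\mathbb N^2$, coprime $(a,b)\in\mathbb N^2$ with $d_1b-d_2a\ne0$ and $k\ge1$, $(d_1,d_2)$ and $(ka,kb)$ satisfy the one-bending property if every broken line in $\mathfrak D$ with initial exponent $(-d_1,-d_2)$, final exponent $(ka-d_1,kb-d_2)$, and no bend on the positive $x$-axis or positive $y$-axis, has exactly one bend. *)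

theory Defs
  imports "HOL-Analysis.Analysis"
begin

text \<open>The variables p_(i,j) are indexed by pairs (i,j) with i = 1, 1 <= j <= l1 or
  i = 2, 1 <= j <= l2.  A monomial in the p's (an element of the monoid M) is an
  exponent function alpha :: nat * nat => nat vanishing outside this index set.
  An element of the completed ring R^ (completion of k[M][x^+-1,y^+-1] at the
  ideal I generated by the p's) is represented by its coefficient function
  g alpha m = coefficient of p^alpha x^m, subject to: zero outside the admissible
  p-exponents, and for each alpha only finitely many m with nonzero coefficient.\<close>

type_synonym pexp = "nat \<times> nat \<Rightarrow> nat"
type_synonym 'k ser = "pexp \<Rightarrow> int \<times> int \<Rightarrow> 'k"

definition pidx :: "nat \<Rightarrow> nat \<Rightarrow> (nat \<times> nat) set" where
  "pidx l1 l2 = {(i, j). (i = 1 \<and> 1 \<le> j \<and> j \<le> l1) \<or> (i = 2 \<and> 1 \<le> j \<and> j \<le> l2)}"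

definition pexps :: "nat \<Rightarrow> nat \<Rightarrow> pexp set" where
  "pexps l1 l2 = {\<alpha>. \<forall>q. q \<notin> pidx l1 l2 \<longrightarrow> \<alpha> q = 0}"

text \<open>total degree of a p-monomial (= its I-adic order)\<close>
definition pdeg :: "nat \<Rightarrow> nat \<Rightarrow> pexp \<Rightarrow> nat" where
  "pdeg l1 l2 \<alpha> = (\<Sum>q\<in>pidx l1 l2. \<alpha> q)"

definition pvar :: "nat \<times> nat \<Rightarrow> pexp" where
  "pvar q = (\<lambda>q'. if q' = q then 1 else 0)"

definition is_elem :: "nat \<Rightarrow> nat \<Rightarrow> 'k::zero ser \<Rightarrow> bool" where
  "is_elem l1 l2 g \<longleftrightarrow>
     (\<forall>\<alpha> m. \<alpha> \<notin> pexps l1 l2 \<longrightarrow> g \<alpha> m = 0) \<and> (\<forall>\<alpha>. finite {m. g \<alpha> m \<noteq> 0})"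

definition ser_one :: "'k::{zero,one} ser" where
  "ser_one \<alpha> m = (if \<alpha> = (\<lambda>_. 0) \<and> m = (0, 0) then 1 else 0)"

definition ser_sub :: "'k::ab_group_add ser \<Rightarrow> 'k ser \<Rightarrow> 'k ser" where
  "ser_sub g h \<alpha> m = g \<alpha> m - h \<alpha> m"

definition vsub :: "int \<times> int \<Rightarrow> int \<times> int \<Rightarrow> int \<times> int" where
  "vsub m m' = (fst m - fst m', snd m - snd m')"

definition pairing :: "int \<times> int \<Rightarrow> int \<times> int \<Rightarrow> int" where
  "pairing n m = fst n * fst m + snd n * snd m"

text \<open>product in R^ (all sums are finite for elements of R^)\<close>
definition ser_mult :: "'k::comm_ring_1 ser \<Rightarrow> 'k ser \<Rightarrow> 'k ser" where
  "ser_mult g h \<alpha> m =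
     (\<Sum>\<beta>\<in>{\<beta>. \<forall>q. \<beta> q \<le> \<alpha> q}. \<Sum>m'\<in>{m'. g \<beta> m' \<noteq> 0}.
        g \<beta> m' * h (\<lambda>q. \<alpha> q - \<beta> q) (vsub m m'))"

definition ser_pow :: "'k::comm_ring_1 ser \<Rightarrow> nat \<Rightarrow> 'k ser" where
  "ser_pow g j = (ser_mult g ^^ j) ser_one"

text \<open>inverse of an element g with g = 1 mod I: sum of the geometric series
  (1 - g)^j, truncated where it is I-adically zero\<close>
definition ser_inv :: "nat \<Rightarrow> nat \<Rightarrow> 'k::comm_ring_1 ser \<Rightarrow> 'k ser" where
  "ser_inv l1 l2 g \<alpha> m = (\<Sum>j\<le>pdeg l1 l2 \<alpha>. ser_pow (ser_sub ser_one g) j \<alpha> m)"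

definition ser_zpow :: "nat \<Rightarrow> nat \<Rightarrow> 'k::comm_ring_1 ser \<Rightarrow> int \<Rightarrow> 'k ser" where
  "ser_zpow l1 l2 g z = (if 0 \<le> z then ser_pow g (nat z) else ser_pow (ser_inv l1 l2 g) (nat (- z)))"

definition cong_modI :: "nat \<Rightarrow> nat \<Rightarrow> nat \<Rightarrow> 'k ser \<Rightarrow> 'k ser \<Rightarrow> bool" where
  "cong_modI l1 l2 N g h \<longleftrightarrow> (\<forall>\<alpha> m. pdeg l1 l2 \<alpha> < N \<longrightarrow> g \<alpha> m = h \<alpha> m)"

text \<open>Wall-crossing automorphism of R^ for a wall with function f, where n is the
  normal vector with <n,v> < 0 for the velocity v of the crossing path:
  x^m |-> x^m f^<n,m> (p's fixed), extended I-adically continuously.\<close>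
definition wall_cross :: "nat \<Rightarrow> nat \<Rightarrow> 'k::comm_ring_1 ser \<Rightarrow> int \<times> int \<Rightarrow> 'k ser \<Rightarrow> 'k ser" where
  "wall_cross l1 l2 f n g \<alpha> m =
     (\<Sum>\<beta>\<in>{\<beta>. \<forall>q. \<beta> q \<le> \<alpha> q}. \<Sum>m'\<in>{m'. g \<beta> m' \<noteq> 0}.
        g \<beta> m' * ser_zpow l1 l2 f (pairing n m') (\<lambda>q. \<alpha> q - \<beta> q) (vsub m m'))"

text \<open>P_1 = 1 + sum_{j=1}^{l1} p_(1,j) x^j and P_2 = 1 + sum_{j=1}^{l2} p_(2,j) y^j\<close>
definition P1 :: "nat \<Rightarrow> 'k::{zero,one} ser" where
  "P1 l1 \<alpha> m = (if \<alpha> = (\<lambda>_. 0) \<and> m = (0, 0) then 1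
     else if (\<exists>j. 1 \<le> j \<and> j \<le> l1 \<and> \<alpha> = pvar (1, j) \<and> m = (int j, 0)) then 1 else 0)"

definition P2 :: "nat \<Rightarrow> 'k::{zero,one} ser" where
  "P2 l2 \<alpha> m = (if \<alpha> = (\<lambda>_. 0) \<and> m = (0, 0) then 1
     else if (\<exists>j. 1 \<le> j \<and> j \<le> l2 \<and> \<alpha> = pvar (2, j) \<and> m = (0, int j)) then 1 else 0)"

text \<open>ray directions: coprime (a,b) with a,b > 0; the ray is R_{<=0}(a,b)\<close>
definition raydirs :: "(int \<times> int) set" where
  "raydirs = {(a, b). 0 < a \<and> 0 < b \<and> coprime a b}"

text \<open>f is an admissible wall function for primitive direction m0:
  f = 1 + sum_{j>=1} c_j x^{j m0} with c_j in the ideal generated by the p's\<close>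
definition is_wall_fun :: "nat \<Rightarrow> nat \<Rightarrow> int \<times> int \<Rightarrow> 'k::{zero,one} ser \<Rightarrow> bool" where
  "is_wall_fun l1 l2 m0 f \<longleftrightarrow> is_elem l1 l2 f \<and>
     (\<forall>\<alpha>. f \<alpha> (0, 0) = (if \<alpha> = (\<lambda>_. 0) then 1 else 0)) \<and>
     (\<forall>\<alpha> m. f \<alpha> m \<noteq> 0 \<longrightarrow> (\<exists>j::nat. m = (int j * fst m0, int j * snd m0))) \<and>
     (\<forall>j::nat. 1 \<le> j \<longrightarrow> f (\<lambda>_. 0) (int j * fst m0, int j * snd m0) = 0)"

definition nontriv_rays :: "nat \<Rightarrow> nat \<Rightarrow> nat \<Rightarrow> (int \<times> int \<Rightarrow> 'k::{zero,one} ser) \<Rightarrow> (int \<times> int) set" where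
  "nontriv_rays l1 l2 N f = {v \<in> raydirs. \<not> cong_modI l1 l2 N (f v) ser_one}"

text \<open>The wall-crossing automorphisms met by a small counterclockwise loop around the
  origin, starting in the open fourth quadrant (which contains no walls), in the
  order they are crossed: positive x-axis, positive y-axis, negative x-axis, the
  rays R_{<=0}(a,b) by increasing slope b/a, negative y-axis.  Only the rays with
  function nontrivial modulo I^N are listed (the others act trivially modulo I^N).
  The normal n is the primitive one with <n, velocity> < 0.\<close>
definition loop_ops :: "nat \<Rightarrow> nat \<Rightarrow> nat \<Rightarrow> (int \<times> int \<Rightarrow> 'k::comm_ring_1 ser) \<Rightarrow> ('k ser \<Rightarrow> 'k ser) list" where
  "loop_ops l1 l2 N f =
     [wall_cross l1 l2 (P1 l1) (0, -1), wall_cross l1 l2 (P2 l2) (1, 0),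
      wall_cross l1 l2 (P1 l1) (0, 1)]
     @ map (\<lambda>v. wall_cross l1 l2 (f v) (- snd v, fst v))
         (SOME xs. distinct xs \<and> set xs = nontriv_rays l1 l2 N f \<and>
            sorted_wrt (\<lambda>v w. real_of_int (snd v) / real_of_int (fst v)
                               < real_of_int (snd w) / real_of_int (fst w)) xs)
     @ [wall_cross l1 l2 (P2 l2) (-1, 0)]"

text \<open>path-ordered product theta_r o ... o theta_1 (theta_1 crossed first)\<close>
definition path_ordered :: "('a \<Rightarrow> 'a) list \<Rightarrow> 'a \<Rightarrow> 'a" where
  "path_ordered ts = fold (\<lambda>t acc. t \<circ> acc) ts id"

text \<open>f describes Scat(P1,P2): the diagram with lines (R e1, P1), (R e2, P2) and rays
  (R_{<=0}(a,b), f (a,b)) for coprime (a,b) in Z_{>0}^2 (trivial function allowed,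
  meaning no ray) is a scattering diagram (finitely many walls nontrivial modulo
  each I^N) and is consistent.\<close>
definition is_scat :: "nat \<Rightarrow> nat \<Rightarrow> (int \<times> int \<Rightarrow> 'k::comm_ring_1 ser) \<Rightarrow> bool" where
  "is_scat l1 l2 f \<longleftrightarrow>
     (\<forall>v\<in>raydirs. is_wall_fun l1 l2 v (f v)) \<and>
     (\<forall>N. finite (nontriv_rays l1 l2 N f)) \<and>
     (\<forall>N g. is_elem l1 l2 g \<longrightarrow> cong_modI l1 l2 N (path_ordered (loop_ops l1 l2 N f) g) g)"

datatype wall = XAxis | YAxis | Ray "int \<times> int"

definition walls :: "wall set" where
  "walls = {XAxis, YAxis} \<union> Ray ` raydirs"

definition wall_set :: "wall \<Rightarrow> (real \<times> real) set" where
  "wall_set w = (case w of XAxis \<Rightarrow> {P. snd P = 0} | YAxis \<Rightarrow> {P. fst P = 0}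
     | Ray v \<Rightarrow> {(- t * real_of_int (fst v), - t * real_of_int (snd v)) | t. 0 \<le> t})"

definition wall_dir :: "wall \<Rightarrow> int \<times> int" where
  "wall_dir w = (case w of XAxis \<Rightarrow> (1, 0) | YAxis \<Rightarrow> (0, 1) | Ray v \<Rightarrow> v)"

definition wall_fun :: "nat \<Rightarrow> nat \<Rightarrow> (int \<times> int \<Rightarrow> 'k::{zero,one} ser) \<Rightarrow> wall \<Rightarrow> 'k ser" where
  "wall_fun l1 l2 f w = (case w of XAxis \<Rightarrow> P1 l1 | YAxis \<Rightarrow> P2 l2 | Ray v \<Rightarrow> f v)"

definition wall_normal :: "wall \<Rightarrow> int \<times> int" where
  "wall_normal w = (- snd (wall_dir w), fst (wall_dir w))"

definition bad_points :: "(real \<times> real) set" where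
  "bad_points = {(0, 0)} \<union>
     {P. \<exists>w1\<in>walls. \<exists>w2\<in>walls. w1 \<noteq> w2 \<and> P \<in> wall_set w1 \<and> P \<in> wall_set w2}"

definition rvec :: "int \<times> int \<Rightarrow> real \<times> real" where
  "rvec m = (real_of_int (fst m), real_of_int (snd m))"

text \<open>multiplication in k[[p]] (coefficients of monomials x^m in R^)\<close>
definition ps_mult :: "(pexp \<Rightarrow> 'k::comm_ring_1) \<Rightarrow> (pexp \<Rightarrow> 'k) \<Rightarrow> pexp \<Rightarrow> 'k" where
  "ps_mult c d \<alpha> = (\<Sum>\<beta>\<in>{\<beta>. \<forall>q. \<beta> q \<le> \<alpha> q}. c \<beta> * d (\<lambda>q. \<alpha> q - \<beta> q))"

definition ps_one :: "pexp \<Rightarrow> 'k::{zero,one}" where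
  "ps_one \<alpha> = (if \<alpha> = (\<lambda>_. 0) then 1 else 0)"

text \<open>A broken line: beta :: real => R^2 (only its values on (-oo,0] matter),
  number of breakpoints l, breakpoints tau 1 < ... < tau l < 0, exponents ms 0..ms l,
  coefficients cs 0..cs l in k[[p]]; the monomial on the i-th piece is
  (cs i) x^(ms i).  On the i-th piece (tau i <= t <= tau (i+1), with tau 0 = -oo
  and tau (l+1) = 0) beta is affine with velocity -ms i.\<close>
definition broken_line ::
  "nat \<Rightarrow> nat \<Rightarrow> (int \<times> int \<Rightarrow> 'k::comm_ring_1 ser) \<Rightarrow> (real \<Rightarrow> real \<times> real) \<Rightarrow> nat \<Rightarrow>
   (nat \<Rightarrow> real) \<Rightarrow> (nat \<Rightarrow> int \<times> int) \<Rightarrow> (nat \<Rightarrow> pexp \<Rightarrow> 'k) \<Rightarrow> bool" where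
  "broken_line l1 l2 f \<beta> l \<tau> ms cs \<longleftrightarrow>
     (\<forall>i. 1 \<le> i \<and> i < l \<longrightarrow> \<tau> i < \<tau> (Suc i)) \<and> (1 \<le> l \<longrightarrow> \<tau> l < 0) \<and>
     cs 0 = ps_one \<and>
     (\<forall>t\<le>0. \<beta> t \<notin> bad_points) \<and>
     (\<forall>i\<le>l. \<forall>t s. t \<le> (if i = l then 0 else \<tau> (Suc i)) \<and> s \<le> (if i = l then 0 else \<tau> (Suc i))
         \<and> (i = 0 \<or> (\<tau> i \<le> t \<and> \<tau> i \<le> s))
         \<longrightarrow> \<beta> t - \<beta> s = (s - t) *\<^sub>R rvec (ms i)) \<and>
     (\<forall>i. 1 \<le> i \<and> i \<le> l \<longrightarrow>
        (\<exists>w\<in>walls. \<beta> (\<tau> i) \<in> wall_set w \<and>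
           (\<forall>w'\<in>walls. \<beta> (\<tau> i) \<in> wall_set w' \<longrightarrow> w' = w) \<and>
           pairing (wall_normal w) (ms (i - 1)) \<noteq> 0 \<and>
           cs i = ps_mult (cs (i - 1))
                   (\<lambda>\<alpha>. ser_pow (wall_fun l1 l2 f w) (nat \<bar>pairing (wall_normal w) (ms (i - 1))\<bar>)
                          \<alpha> (vsub (ms i) (ms (i - 1)))) \<and>
           cs i \<noteq> (\<lambda>_. 0) \<and>
           \<not> (cs i = cs (i - 1) \<and> ms i = ms (i - 1))))"

definition one_bending ::
  "nat \<Rightarrow> nat \<Rightarrow> (int \<times> int \<Rightarrow> 'k::comm_ring_1 ser) \<Rightarrow> nat \<Rightarrow> nat \<Rightarrow> nat \<Rightarrow> nat \<Rightarrow> nat \<Rightarrow> bool" where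
  "one_bending l1 l2 f d1 d2 a b k \<longleftrightarrow>
     (\<forall>\<beta> l \<tau> ms cs. broken_line l1 l2 f \<beta> l \<tau> ms cs \<and>
        ms 0 = (- int d1, - int d2) \<and>
        ms l = (int k * int a - int d1, int k * int b - int d2) \<and>
        (\<forall>i. 1 \<le> i \<and> i \<le> l \<longrightarrow>
           \<not> ((snd (\<beta> (\<tau> i)) = 0 \<and> fst (\<beta> (\<tau> i)) > 0) \<or> (fst (\<beta> (\<tau> i)) = 0 \<and> snd (\<beta> (\<tau> i)) > 0)))
        \<longrightarrow> l = 1)"

end

theory Submission
  imports Defs
begin


lemma sum_nz: "sum f A \<noteq> 0 \<Longrightarrow> \<exists>x\<in>A. f x \<noteq> 0"
  by (meson sum.not_neutral_contains_not_neutral)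

lemma ser_mult_supp:
  fixes g h :: "'k::comm_ring_1 ser"
  assumes "\<And>\<beta> m. g \<beta> m \<noteq> 0 \<Longrightarrow> m \<in> C" "\<And>\<beta> m. h \<beta> m \<noteq> 0 \<Longrightarrow> m \<in> C"
    and "\<And>x y. x \<in> C \<Longrightarrow> y \<in> C \<Longrightarrow> (fst x + fst y, snd x + snd y) \<in> C"
    and "ser_mult g h \<alpha> m \<noteq> 0"
  shows "m \<in> C"
proof -
  from assms(4) obtain \<beta> where "(\<Sum>m'\<in>{m'. g \<beta> m' \<noteq> 0}. g \<beta> m' * h (\<lambda>q. \<alpha> q - \<beta> q) (vsub m m')) \<noteq> 0"
    unfolding ser_mult_def using sum_nz by blast
  then obtain m' where "g \<beta> m' * h (\<lambda>q. \<alpha> q - \<beta> q) (vsub m m') \<noteq> 0" using sum_nz by blast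
  hence "g \<beta> m' \<noteq> 0" "h (\<lambda>q. \<alpha> q - \<beta> q) (vsub m m') \<noteq> 0" by auto
  hence "m' \<in> C" "vsub m m' \<in> C" using assms(1,2) by blast+
  hence "(fst m' + fst (vsub m m'), snd m' + snd (vsub m m')) \<in> C" using assms(3) by blast
  thus ?thesis by (simp add: vsub_def)
qed

lemma ser_pow_supp:
  fixes g :: "'k::comm_ring_1 ser"
  assumes "\<And>\<beta> m. g \<beta> m \<noteq> 0 \<Longrightarrow> m \<in> C" "(0,0) \<in> C"
    and "\<And>x y. x \<in> C \<Longrightarrow> y \<in> C \<Longrightarrow> (fst x + fst y, snd x + snd y) \<in> C"
  shows "ser_pow g n \<beta> m \<noteq> 0 \<Longrightarrow> m \<in> C"
proof (induction n arbitrary: \<beta> m)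
  case 0
  then show ?case using assms(2) by (auto simp: ser_pow_def ser_one_def split: if_splits)
next
  case (Suc n)
  have "ser_mult g (ser_pow g n) \<beta> m \<noteq> 0" using Suc.prems by (simp add: ser_pow_def)
  then show ?case using ser_mult_supp[of g C "ser_pow g n"] assms Suc.IH by blast
qed

lemma ser_mult_fin:
  fixes g h :: "'k::comm_ring_1 ser"
  assumes "\<And>\<beta>. finite {m. g \<beta> m \<noteq> 0}" "\<And>\<beta>. finite {m. h \<beta> m \<noteq> 0}"
  shows "finite {m. ser_mult g h \<alpha> m \<noteq> 0}"
proof (cases "finite {\<beta>::pexp. \<forall>q. \<beta> q \<le> \<alpha> q}")
  case False
  then have "\<And>m. ser_mult g h \<alpha> m = 0" by (simp add: ser_mult_def)
  then show ?thesis by simp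
next
  case True
  let ?B = "{\<beta>::pexp. \<forall>q. \<beta> q \<le> \<alpha> q}"
  let ?S = "(\<lambda>(x,y). (fst x + fst y, snd x + snd y)) ` (\<Union>\<beta>\<in>?B. {m. g \<beta> m \<noteq> 0} \<times> {m. h (\<lambda>q. \<alpha> q - \<beta> q) m \<noteq> 0})"
  have "{m. ser_mult g h \<alpha> m \<noteq> 0} \<subseteq> ?S"
  proof
    fix m assume "m \<in> {m. ser_mult g h \<alpha> m \<noteq> 0}"
    then obtain \<beta> where b: "\<beta> \<in> ?B" and "(\<Sum>m'\<in>{m'. g \<beta> m' \<noteq> 0}. g \<beta> m' * h (\<lambda>q. \<alpha> q - \<beta> q) (vsub m m')) \<noteq> 0"
      unfolding ser_mult_def using sum_nz by force
    then obtain m' where "g \<beta> m' * h (\<lambda>q. \<alpha> q - \<beta> q) (vsub m m') \<noteq> 0" using sum_nz by blast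
    hence "g \<beta> m' \<noteq> 0" "h (\<lambda>q. \<alpha> q - \<beta> q) (vsub m m') \<noteq> 0" by auto
    hence "(m', vsub m m') \<in> (\<Union>\<beta>\<in>?B. {m. g \<beta> m \<noteq> 0} \<times> {m. h (\<lambda>q. \<alpha> q - \<beta> q) m \<noteq> 0})" using b by blast
    moreover have "m = (\<lambda>(x,y). (fst x + fst y, snd x + snd y)) (m', vsub m m')" by (simp add: vsub_def)
    ultimately show "m \<in> ?S" by blast
  qed
  moreover have "finite ?S" using True assms by auto
  ultimately show ?thesis by (rule finite_subset)
qed

lemma ser_pow_fin:
  fixes g :: "'k::comm_ring_1 ser"
  assumes "\<And>\<beta>. finite {m. g \<beta> m \<noteq> 0}"
  shows "finite {m. ser_pow g n \<beta> m \<noteq> 0}"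
proof (induction n arbitrary: \<beta>)
  case 0
  have "{m. ser_pow g 0 \<beta> m \<noteq> 0} \<subseteq> {(0,0)}" by (auto simp: ser_pow_def ser_one_def split: if_splits)
  then show ?case using finite_subset by blast
next
  case (Suc n)
  then show ?case using ser_mult_fin[of g "ser_pow g n"] assms by (simp add: ser_pow_def)
qed

lemma ser_mult_00:
  fixes g h :: "'k::comm_ring_1 ser"
  assumes fin: "\<And>\<beta>. finite {m. g \<beta> m \<noteq> 0}"
   and gC: "\<And>\<beta> m. g \<beta> m \<noteq> 0 \<Longrightarrow> m \<in> C" and hC: "\<And>\<beta> m. h \<beta> m \<noteq> 0 \<Longrightarrow> m \<in> C"
   and C0: "\<And>m. m \<in> C \<Longrightarrow> vsub (0,0) m \<in> C \<Longrightarrow> m = (0,0)"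
  shows "ser_mult g h \<alpha> (0,0) = (\<Sum>\<beta>\<in>{\<beta>. \<forall>q. \<beta> q \<le> \<alpha> q}. g \<beta> (0,0) * h (\<lambda>q. \<alpha> q - \<beta> q) (0,0))"
  unfolding ser_mult_def
proof (rule sum.cong[OF refl])
  fix \<beta> assume "\<beta> \<in> {\<beta>::pexp. \<forall>q. \<beta> q \<le> \<alpha> q}"
  let ?S = "{m'. g \<beta> m' \<noteq> 0}"
  let ?\<phi> = "\<lambda>m'. g \<beta> m' * h (\<lambda>q. \<alpha> q - \<beta> q) (vsub (0,0) m')"
  have "sum ?\<phi> ?S = (\<Sum>m'\<in>?S. if m' = (0,0) then ?\<phi> (0,0) else 0)"
  proof (rule sum.cong[OF refl])
    fix m' assume "m' \<in> ?S"
    show "?\<phi> m' = (if m' = (0,0) then ?\<phi> (0,0) else 0)"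
    proof (cases "m' = (0,0)")
      case False
      have "h (\<lambda>q. \<alpha> q - \<beta> q) (vsub (0,0) m') = 0"
        using C0 gC hC \<open>m' \<in> ?S\<close> False by blast
      then show ?thesis using False by simp
    qed simp
  qed
  also have "\<dots> = (if (0,0) \<in> ?S then ?\<phi> (0,0) else 0)" using fin by (simp add: sum.delta)
  also have "\<dots> = g \<beta> (0,0) * h (\<lambda>q. \<alpha> q - \<beta> q) (0,0)" by (auto simp: vsub_def)
  finally show "sum ?\<phi> ?S = g \<beta> (0,0) * h (\<lambda>q. \<alpha> q - \<beta> q) (0,0)" .
qed

lemma ps_one_inf:
  assumes "\<not> finite {\<beta>::pexp. \<forall>q. \<beta> q \<le> \<alpha> q}"
  shows "ps_one \<alpha> = 0"
proof -
  have "\<alpha> \<noteq> (\<lambda>_. 0)"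
  proof
    assume a: "\<alpha> = (\<lambda>_. 0)"
    have "{\<beta>::pexp. \<forall>q. \<beta> q \<le> \<alpha> q} = {\<lambda>_. 0}" unfolding a by (auto simp: fun_eq_iff)
    then show False using assms by simp
  qed
  then show ?thesis by (simp add: ps_one_def)
qed

lemma ps_one_mult:
  "(\<Sum>\<beta>\<in>{\<beta>::pexp. \<forall>q. \<beta> q \<le> \<alpha> q}. ps_one \<beta> * (c (\<lambda>q. \<alpha> q - \<beta> q) :: 'k::comm_ring_1))
    = (if finite {\<beta>::pexp. \<forall>q. \<beta> q \<le> \<alpha> q} then c \<alpha> else 0)"
proof (cases "finite {\<beta>::pexp. \<forall>q. \<beta> q \<le> \<alpha> q}")
  case True
  have "(\<Sum>\<beta>\<in>{\<beta>::pexp. \<forall>q. \<beta> q \<le> \<alpha> q}. ps_one \<beta> * (c (\<lambda>q. \<alpha> q - \<beta> q) :: 'k))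
      = (\<Sum>\<beta>\<in>{\<beta>::pexp. \<forall>q. \<beta> q \<le> \<alpha> q}. if \<beta> = (\<lambda>_. 0) then c \<alpha> else 0)"
    by (rule sum.cong) (auto simp: ps_one_def)
  also have "\<dots> = c \<alpha>" using True by (simp add: sum.delta)
  finally show ?thesis using True by simp
qed simp

lemma ps_mult_one_right:
  fixes c :: "pexp \<Rightarrow> 'k::comm_ring_1"
  assumes "finite {\<beta>::pexp. \<forall>q. \<beta> q \<le> \<alpha> q}"
  shows "ps_mult c ps_one \<alpha> = c \<alpha>"
proof -
  have "ps_mult c ps_one \<alpha> = (\<Sum>\<beta>\<in>{\<beta>::pexp. \<forall>q. \<beta> q \<le> \<alpha> q}. if \<beta> = \<alpha> then c \<alpha> else 0)"
    unfolding ps_mult_def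
  proof (rule sum.cong[OF refl])
    fix \<beta> assume b: "\<beta> \<in> {\<beta>::pexp. \<forall>q. \<beta> q \<le> \<alpha> q}"
    have "(\<lambda>q. \<alpha> q - \<beta> q) = (\<lambda>_. 0) \<longleftrightarrow> \<beta> = \<alpha>"
    proof
      assume "(\<lambda>q. \<alpha> q - \<beta> q) = (\<lambda>_. 0)"
      then have "\<And>q. \<alpha> q - \<beta> q = 0" by meson
      show "\<beta> = \<alpha>"
      proof
        fix x show "\<beta> x = \<alpha> x" 
        proof -
          have "\<beta> x \<le> \<alpha> x" using b by blast
          then show ?thesis using \<open>\<And>q. \<alpha> q - \<beta> q = 0\<close>[of x] by simp
        qed
      qed
    qed auto
    then show "c \<beta> * ps_one (\<lambda>q. \<alpha> q - \<beta> q) = (if \<beta> = \<alpha> then c \<alpha> else 0)"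
      by (auto simp: ps_one_def)
  qed
  also have "\<dots> = c \<alpha>" using assms by (simp add: sum.delta')
  finally show ?thesis .
qed

lemma ps_mult_inf:
  "\<not> finite {\<beta>::pexp. \<forall>q. \<beta> q \<le> \<alpha> q} \<Longrightarrow> ps_mult c d \<alpha> = 0"
  by (simp add: ps_mult_def)

definition good :: "'k::comm_ring_1 ser \<Rightarrow> int \<times> int \<Rightarrow> bool" where
  "good F d \<longleftrightarrow> (\<forall>\<beta>. finite {m. F \<beta> m \<noteq> 0}) \<and>
     (\<forall>\<beta> m. F \<beta> m \<noteq> 0 \<longrightarrow> (\<exists>j::nat. m = (int j * fst d, int j * snd d))) \<and>
     (\<forall>\<alpha>. F \<alpha> (0,0) = ps_one \<alpha>)"

lemma ser_pow_good:
  fixes F :: "'k::comm_ring_1 ser"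
  assumes g: "good F d" and d: "fst d \<ge> 0" "snd d \<ge> 0" "d \<noteq> (0,0)"
  shows "ser_pow F n \<beta> m \<noteq> 0 \<Longrightarrow> (\<exists>j::nat. m = (int j * fst d, int j * snd d))"
    and "ser_pow F n \<alpha> (0,0) = ps_one \<alpha>"
proof -
  define C where "C = {m. \<exists>j::nat. m = (int j * fst d, int j * snd d)}"
  let ?C = C
  have cl: "\<And>x y. x \<in> ?C \<Longrightarrow> y \<in> ?C \<Longrightarrow> (fst x + fst y, snd x + snd y) \<in> ?C"
  proof -
    fix x y assume "x \<in> ?C" "y \<in> ?C"
    then obtain i j where "x = (int i * fst d, int i * snd d)" "y = (int j * fst d, int j * snd d)" unfolding C_def by auto
    then have "(fst x + fst y, snd x + snd y) = (int (i+j) * fst d, int (i+j) * snd d)"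
      by (simp add: algebra_simps)
    then show "(fst x + fst y, snd x + snd y) \<in> ?C" unfolding C_def by blast
  qed
  have z: "(0,0) \<in> ?C" unfolding C_def by (auto intro: exI[of _ 0])
  have FC: "\<And>\<beta> m. F \<beta> m \<noteq> 0 \<Longrightarrow> m \<in> ?C" using g unfolding good_def C_def by blast
  have SP: "\<And>n \<beta> m. ser_pow F n \<beta> m \<noteq> 0 \<Longrightarrow> m \<in> C"
  proof -
    fix n \<beta> m assume a: "ser_pow F n \<beta> m \<noteq> 0"
    show "m \<in> C"
      apply (rule ser_pow_supp[where g=F and C=C and n=n and \<beta>=\<beta>])
      subgoal using FC by blast
      subgoal using z by blast
      subgoal using cl by blast
      subgoal using a by blast
      done
  qed
  show "ser_pow F n \<beta> m \<noteq> 0 \<Longrightarrow> (\<exists>j::nat. m = (int j * fst d, int j * snd d))"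
    using SP unfolding C_def by blast
  have C0: "\<And>m. m \<in> ?C \<Longrightarrow> vsub (0,0) m \<in> ?C \<Longrightarrow> m = (0,0)"
  proof -
    fix m assume "m \<in> ?C" "vsub (0,0) m \<in> ?C"
    then obtain i j where i: "m = (int i * fst d, int i * snd d)"
      and j: "vsub (0,0) m = (int j * fst d, int j * snd d)" unfolding C_def by auto
    have "(int i + int j) * fst d = 0" "(int i + int j) * snd d = 0" using i j by (auto simp: vsub_def algebra_simps)
    then have "i = 0" using d by (cases d) auto
    then show "m = (0,0)" using i by simp
  qed
  show "ser_pow F n \<alpha> (0,0) = ps_one \<alpha>"
  proof (induction n arbitrary: \<alpha>)
    case 0
    then show ?case by (simp add: ser_pow_def ser_one_def ps_one_def)
  next
    case (Suc n)
    have "ser_pow F (Suc n) \<alpha> (0,0) = ser_mult F (ser_pow F n) \<alpha> (0,0)" by (simp add: ser_pow_def)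
    also have "\<dots> = (\<Sum>\<beta>\<in>{\<beta>. \<forall>q. \<beta> q \<le> \<alpha> q}. F \<beta> (0,0) * ser_pow F n (\<lambda>q. \<alpha> q - \<beta> q) (0,0))"
      by (rule ser_mult_00[where C = ?C]) (use g FC C0 SP in \<open>auto simp: good_def\<close>)
    also have "\<dots> = (\<Sum>\<beta>\<in>{\<beta>. \<forall>q. \<beta> q \<le> \<alpha> q}. ps_one \<beta> * ps_one (\<lambda>q. \<alpha> q - \<beta> q))"
      using g Suc.IH by (simp add: good_def)
    also have "\<dots> = ps_one \<alpha>" unfolding ps_one_mult[where \<alpha>=\<alpha> and c=ps_one]
      using ps_one_inf[of \<alpha>] by (cases "finite {\<beta>::pexp. \<forall>q. \<beta> q \<le> \<alpha> q}") simp_all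
    finally show ?case .
  qed
qed



definition dt :: "int \<times> int \<Rightarrow> int \<times> int \<Rightarrow> int" where
  "dt u w = fst u * snd w - snd u * fst w"

lemma step_id:
  fixes ax ay bx by' wx wy s s' \<delta> :: real
  assumes h1: "- s' * bx - (- s * ax) = \<delta> * wx" and h2: "- s' * by' - (- s * ay) = \<delta> * wy"
  shows "s' * (bx * wy - by' * wx) = s * (ax * wy - ay * wx)"
    and "s * s' * (ax * by' - ay * bx) = - \<delta> * s * (ax * wy - ay * wx)"
proof -
  have e1: "s' * bx = s * ax - \<delta> * wx" using h1 by linarith
  have e2: "s' * by' = s * ay - \<delta> * wy" using h2 by linarith
  have "s' * (bx * wy - by' * wx) = (s' * bx) * wy - (s' * by') * wx" by (simp add: algebra_simps)
  also have "\<dots> = s * (ax * wy - ay * wx)" unfolding e1 e2 by (simp add: algebra_simps)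
  finally show "s' * (bx * wy - by' * wx) = s * (ax * wy - ay * wx)" .
  have "s * s' * (ax * by' - ay * bx) = s * (ax * (s' * by') - ay * (s' * bx))" by (simp add: algebra_simps)
  also have "\<dots> = - \<delta> * s * (ax * wy - ay * wx)" unfolding e1 e2 by (simp add: algebra_simps)
  finally show "s * s' * (ax * by' - ay * bx) = - \<delta> * s * (ax * wy - ay * wx)" .
qed

lemma pos_cancel: "(0::real) < a * b \<Longrightarrow> 0 < a \<Longrightarrow> 0 < b"
  using zero_less_mult_pos by blast

lemma core_sign:
  fixes dir m :: "nat \<Rightarrow> int \<times> int" and jj :: "nat \<Rightarrow> nat" and s \<tau> :: "nat \<Rightarrow> real"
    and P :: "nat \<Rightarrow> real \<times> real" and c :: int
  assumes P: "\<And>i. 1 \<le> i \<Longrightarrow> i \<le> l \<Longrightarrow> P i = (- s i * of_int (fst (dir i)), - s i * of_int (snd (dir i)))"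
   and spos: "\<And>i. 1 \<le> i \<Longrightarrow> i \<le> l \<Longrightarrow> s i > 0"
   and st: "\<And>i. 1 \<le> i \<Longrightarrow> i \<le> l \<Longrightarrow> m i = (fst (m (i-1)) + int (jj i) * fst (dir i), snd (m (i-1)) + int (jj i) * snd (dir i))"
   and tr: "\<And>i. 1 \<le> i \<Longrightarrow> i < l \<Longrightarrow> \<tau> i < \<tau> (Suc i)"
   and tr2: "\<And>i. 1 \<le> i \<Longrightarrow> i < l \<Longrightarrow> P (Suc i) - P i = (\<tau> i - \<tau> (Suc i)) *\<^sub>R rvec (m i)"
   and c: "c * dt (dir 1) (m 0) > 0"
  shows "\<And>i. 1 \<le> i \<Longrightarrow> i \<le> l \<Longrightarrow> c * dt (dir i) (m (i-1)) > 0"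
    and "\<And>i. 1 \<le> i \<Longrightarrow> i < l \<Longrightarrow> c * dt (dir i) (dir (Suc i)) > 0"
proof -
  have dtw: "dt (dir i) (m i) = dt (dir i) (m (i-1))" if "1 \<le> i" "i \<le> l" for i
    using st[OF that] by (simp add: dt_def algebra_simps)
  have ids: "s (Suc i) * real_of_int (dt (dir (Suc i)) (m i)) = s i * real_of_int (dt (dir i) (m i))
     \<and> s i * s (Suc i) * real_of_int (dt (dir i) (dir (Suc i))) = - (\<tau> i - \<tau> (Suc i)) * s i * real_of_int (dt (dir i) (m i))"
    if "1 \<le> i" "i < l" for i
  proof -
    have PS: "P (Suc i) = (- s (Suc i) * of_int (fst (dir (Suc i))), - s (Suc i) * of_int (snd (dir (Suc i))))"
      using P[of "Suc i"] that by simp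
    have PI: "P i = (- s i * of_int (fst (dir i)), - s i * of_int (snd (dir i)))" using P[of i] that by simp
    have h: "P (Suc i) - P i = (\<tau> i - \<tau> (Suc i)) *\<^sub>R rvec (m i)" using tr2 that by blast
    have h1: "- s (Suc i) * of_int (fst (dir (Suc i))) - (- s i * of_int (fst (dir i))) = (\<tau> i - \<tau> (Suc i)) * of_int (fst (m i))"
      using arg_cong[OF h, of fst] unfolding PS PI by (simp add: rvec_def)
    have h2: "- s (Suc i) * of_int (snd (dir (Suc i))) - (- s i * of_int (snd (dir i))) = (\<tau> i - \<tau> (Suc i)) * of_int (snd (m i))"
      using arg_cong[OF h, of snd] unfolding PS PI by (simp add: rvec_def)
    show ?thesis using step_id[OF h1 h2] by (simp add: dt_def)
  qed
  have inv: "s i * real_of_int (dt (dir i) (m (i-1))) = s 1 * real_of_int (dt (dir 1) (m 0))" if "1 \<le> i" "i \<le> l" for i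
    using that
  proof (induction i rule: dec_induct)
    case base then show ?case by simp
  next
    case (step i)
    have "s (Suc i) * real_of_int (dt (dir (Suc i)) (m (Suc i - 1))) = s i * real_of_int (dt (dir i) (m i))"
      using ids[of i] step by simp
    also have "\<dots> = s i * real_of_int (dt (dir i) (m (i-1)))" using dtw[of i] step by simp
    finally show ?case using step by simp
  qed
  have c': "real_of_int c * real_of_int (dt (dir 1) (m 0)) > 0" using c by (simp only: of_int_mult[symmetric] of_int_0_less_iff)
  show K1: "\<And>i. 1 \<le> i \<Longrightarrow> i \<le> l \<Longrightarrow> c * dt (dir i) (m (i-1)) > 0"
  proof -
    fix i assume i: "1 \<le> i" "i \<le> l"
    have eq: "s i * (real_of_int c * real_of_int (dt (dir i) (m (i-1)))) = s 1 * (real_of_int c * real_of_int (dt (dir 1) (m 0)))"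
      using inv[OF i] by (metis mult.left_commute)
    have "s 1 > 0" "s i > 0" using spos i by auto
    then have "s 1 * (real_of_int c * real_of_int (dt (dir 1) (m 0))) > 0" using c' by simp
    then have "s i * (real_of_int c * real_of_int (dt (dir i) (m (i-1)))) > 0" by (subst eq)
    then have "real_of_int c * real_of_int (dt (dir i) (m (i-1))) > 0" using \<open>s i > 0\<close> by (simp add: zero_less_mult_iff)
    then show "c * dt (dir i) (m (i-1)) > 0" by (simp only: of_int_mult[symmetric] of_int_0_less_iff)
  qed
  show "\<And>i. 1 \<le> i \<Longrightarrow> i < l \<Longrightarrow> c * dt (dir i) (dir (Suc i)) > 0"
  proof -
    fix i assume i: "1 \<le> i" "i < l"
    have k: "real_of_int c * real_of_int (dt (dir i) (m (i-1))) > 0" 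
    proof -
      have il: "i \<le> l" using i by simp
      have "c * dt (dir i) (m (i-1)) > 0" by (rule K1[OF i(1) il])
      then show ?thesis by (simp only: of_int_mult[symmetric] of_int_0_less_iff)
    qed
    have e: "s i * s (Suc i) * (real_of_int c * real_of_int (dt (dir i) (dir (Suc i))))
       = (\<tau> (Suc i) - \<tau> i) * s i * (real_of_int c * real_of_int (dt (dir i) (m (i-1))))"
    proof -
      have E: "s i * s (Suc i) * real_of_int (dt (dir i) (dir (Suc i))) = (\<tau> (Suc i) - \<tau> i) * s i * real_of_int (dt (dir i) (m (i-1)))"
        using conjunct2[OF ids[OF i]] dtw[of i] i by simp
      have "s i * s (Suc i) * (real_of_int c * real_of_int (dt (dir i) (dir (Suc i))))
          = real_of_int c * (s i * s (Suc i) * real_of_int (dt (dir i) (dir (Suc i))))" by (simp add: algebra_simps)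
      also have "\<dots> = real_of_int c * ((\<tau> (Suc i) - \<tau> i) * s i * real_of_int (dt (dir i) (m (i-1))))" unfolding E ..
      also have "\<dots> = (\<tau> (Suc i) - \<tau> i) * s i * (real_of_int c * real_of_int (dt (dir i) (m (i-1))))" by (simp add: algebra_simps)
      finally show ?thesis .
    qed
    have "s i > 0" using spos i by simp
    have "s (Suc i) > 0" using spos[of "Suc i"] i by simp
    have "\<tau> (Suc i) - \<tau> i > 0" using tr[of i] i by simp
    have "(\<tau> (Suc i) - \<tau> i) * s i * (real_of_int c * real_of_int (dt (dir i) (m (i-1)))) > 0"
      using mult_pos_pos[OF mult_pos_pos[OF \<open>\<tau> (Suc i) - \<tau> i > 0\<close> \<open>s i > 0\<close>] k] .
    then have "s i * s (Suc i) * (real_of_int c * real_of_int (dt (dir i) (dir (Suc i)))) > 0" by (subst e)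
    note X = this
    have ab: "s i * s (Suc i) > 0" using \<open>s i > 0\<close> \<open>s (Suc i) > 0\<close> by simp
    have Y: "real_of_int c * real_of_int (dt (dir i) (dir (Suc i))) > 0"
      using pos_cancel[OF X ab] .
    show "c * dt (dir i) (dir (Suc i)) > 0" using Y by (simp only: of_int_mult[symmetric] of_int_0_less_iff)
  qed
qed



lemma T1p:
  fixes a1 a2 b1 b2 u1 u2 :: int
  assumes "a1 \<ge> 0" "a2 \<ge> 0" "b1 \<ge> 0" "b2 \<ge> 0" "u1 \<ge> 0" "u2 \<ge> 0"
    and h1: "a1 * b2 - a2 * b1 > 0" and h2: "a1 * u2 - a2 * u1 \<le> 0"
  shows "b1 * u2 - b2 * u1 \<le> 0"
proof (rule ccontr)
  assume "\<not> ?thesis"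
  then have h3: "b2 * u1 < b1 * u2" by simp
  have "a2 * b1 \<ge> 0" using assms by simp
  then have "a1 * b2 > 0" using h1 by linarith
  then have b2: "b2 > 0" using assms by (simp add: zero_less_mult_iff)
  have s1: "a1 * u2 * b2 \<le> a2 * u1 * b2" using h2 b2 by (intro mult_right_mono) auto
  have s2: "a2 * (b2 * u1) \<le> a2 * (b1 * u2)" using h3 assms by (intro mult_left_mono) auto
  have "u2 * (a1 * b2 - a2 * b1) \<le> 0" using s1 s2 by (simp add: algebra_simps)
  then have "u2 \<le> 0" using h1 by (simp add: mult_le_0_iff)
  then have "u2 = 0" using assms by simp
  then have "b2 * u1 < 0" using h3 by simp
  moreover have "b2 * u1 \<ge> 0" using assms by simp
  ultimately show False by simp
qed

lemma T2p:
  fixes a1 a2 b1 b2 w1 w2 :: int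
  assumes "a1 \<ge> 0" "a2 \<ge> 0" "b1 \<ge> 0" "b2 \<ge> 0" "w1 \<ge> 0" "w2 \<ge> 0"
    and h1: "a1 * b2 - a2 * b1 > 0" and h2: "b1 * w2 - b2 * w1 > 0"
  shows "a1 * w2 - a2 * w1 > 0"
proof -
  have "b2 * w1 \<ge> 0" using assms by simp
  then have "b1 * w2 > 0" using h2 by linarith
  then have b1: "b1 > 0" using assms by (simp add: zero_less_mult_iff)
  have "a2 * b1 \<ge> 0" using assms by simp
  then have "a1 * b2 > 0" using h1 by linarith
  then have a1: "a1 > 0" using assms by (simp add: zero_less_mult_iff)
  have s1: "a1 * (b2 * w1) < a1 * (b1 * w2)" using h2 a1 by (intro mult_strict_left_mono) auto
  have s2: "a2 * b1 * w1 \<le> a1 * b2 * w1" using h1 assms by (intro mult_right_mono) auto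
  have "b1 * (a1 * w2 - a2 * w1) > 0" using s1 s2 by (simp add: algebra_simps)
  then show ?thesis using b1 by (simp add: zero_less_mult_iff)
qed

definition Qd :: "int \<times> int \<Rightarrow> bool" where
  "Qd a \<longleftrightarrow> fst a \<ge> 0 \<and> snd a \<ge> 0"

definition sw :: "int \<times> int \<Rightarrow> int \<times> int" where "sw a = (snd a, fst a)"

lemma dt_sw: "dt (sw a) (sw b) = - dt a b" by (simp add: dt_def sw_def)
lemma Qd_sw: "Qd (sw a) = Qd a" by (auto simp: Qd_def sw_def)

lemma T1:
  assumes c: "c = 1 \<or> c = -1" and "Qd a" "Qd b" "Qd u" "c * dt a b > 0" "c * dt a u \<le> 0"
  shows "c * dt b u \<le> 0"
  using c
proof
  assume "c = 1"
  then show ?thesis using assms T1p[of "fst a" "snd a" "fst b" "snd b" "fst u" "snd u"] by (simp add: Qd_def dt_def)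
next
  assume "c = -1"
  then show ?thesis using assms T1p[of "snd a" "fst a" "snd b" "fst b" "snd u" "fst u"] by (simp add: Qd_def dt_def algebra_simps)
qed

lemma T2:
  assumes c: "c = 1 \<or> c = -1" and "Qd a" "Qd b" "Qd w" "c * dt a b > 0" "c * dt b w > 0"
  shows "c * dt a w > 0"
  using c
proof
  assume "c = 1"
  then show ?thesis using assms T2p[of "fst a" "snd a" "fst b" "snd b" "fst w" "snd w"] by (simp add: Qd_def dt_def)
next
  assume "c = -1"
  then show ?thesis using assms T2p[of "snd a" "fst a" "snd b" "fst b" "snd w" "fst w"] by (simp add: Qd_def dt_def algebra_simps)
qed

definition du :: "(nat \<Rightarrow> int \<times> int) \<Rightarrow> nat \<Rightarrow> int \<times> int" where
  "du m i = (fst (m i) - fst (m 0), snd (m i) - snd (m 0))"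

lemma core_comb:
  fixes dir m :: "nat \<Rightarrow> int \<times> int" and jj :: "nat \<Rightarrow> nat" and c :: int
  assumes c: "c = 1 \<or> c = -1"
   and Q: "\<And>i. 1 \<le> i \<Longrightarrow> i \<le> l \<Longrightarrow> Qd (dir i)"
   and st: "\<And>i. 1 \<le> i \<Longrightarrow> i \<le> l \<Longrightarrow> m i = (fst (m (i-1)) + int (jj i) * fst (dir i), snd (m (i-1)) + int (jj i) * snd (dir i))"
   and jpos: "\<And>i. 1 \<le> i \<Longrightarrow> i \<le> l \<Longrightarrow> jj i \<ge> 1"
   and K1: "\<And>i. 1 \<le> i \<Longrightarrow> i \<le> l \<Longrightarrow> c * dt (dir i) (m (i-1)) > 0"
   and K2: "\<And>i. 1 \<le> i \<Longrightarrow> i < l \<Longrightarrow> c * dt (dir i) (dir (Suc i)) > 0"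
  shows "c * dt (du m l) (m 0) \<ge> 0"
    and "2 \<le> l \<Longrightarrow> c * dt (dir 1) (du m l) > 0 \<and> fst (dir 1) \<le> fst (du m l) \<and> snd (dir 1) \<le> snd (du m l)"
proof -
  have dust: "du m i = (fst (du m (i-1)) + int (jj i) * fst (dir i), snd (du m (i-1)) + int (jj i) * snd (dir i))"
    if "1 \<le> i" "i \<le> l" for i
    using st[OF that] by (simp add: du_def)
  have du0: "du m 0 = (0,0)" by (simp add: du_def)
  have inv: "Qd (du m (i-1)) \<and> c * dt (dir i) (du m (i-1)) \<le> 0" if "1 \<le> i" "i \<le> l" for i
    using that
  proof (induction i rule: dec_induct)
    case base
    then show ?case by (simp add: du0 Qd_def dt_def)
  next
    case (step i)
    have Qi: "Qd (dir i)" using Q step by simp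
    have Qn: "Qd (du m i)" using step dust[of i] Qi by (simp add: Qd_def)
    have "c * dt (dir i) (du m i) = c * dt (dir i) (du m (i-1))"
      using dust[of i] step by (simp add: dt_def algebra_simps)
    moreover have "c * dt (dir i) (du m (i-1)) \<le> 0" using step.IH step.prems by simp
    ultimately have "c * dt (dir i) (du m i) \<le> 0" by linarith
    moreover have "c * dt (dir i) (dir (Suc i)) > 0" using K2[of i] step by simp
    ultimately have "c * dt (dir (Suc i)) (du m i) \<le> 0"
      using T1[OF c Qi _ Qn] Q[of "Suc i"] step by simp
    then show ?case using Qn by simp
  qed
  have D: "c * dt (dir i) (m 0) > 0" if "1 \<le> i" "i \<le> l" for i
  proof -
    have "dt (dir i) (m (i-1)) = dt (dir i) (m 0) + dt (dir i) (du m (i-1))"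
      by (simp add: dt_def du_def algebra_simps)
    then have "c * dt (dir i) (m (i-1)) = c * dt (dir i) (m 0) + c * dt (dir i) (du m (i-1))"
      by (simp add: algebra_simps)
    then show ?thesis using K1[OF that] inv[OF that] by linarith
  qed
  have S: "c * dt (du m i) (m 0) \<ge> 0" if "i \<le> l" for i
    using that
  proof (induction i)
    case 0
    then show ?case by (simp add: du0 dt_def)
  next
    case (Suc i)
    have e: "dt (du m (Suc i)) (m 0) = dt (du m i) (m 0) + int (jj (Suc i)) * dt (dir (Suc i)) (m 0)"
      using dust[of "Suc i"] Suc.prems by (simp add: dt_def algebra_simps)
    have "c * dt (dir (Suc i)) (m 0) > 0" using D[of "Suc i"] Suc.prems by simp
    then have "int (jj (Suc i)) * (c * dt (dir (Suc i)) (m 0)) \<ge> 0" by simp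
    moreover have "c * dt (du m i) (m 0) \<ge> 0" using Suc by simp
    ultimately show ?case unfolding e by (simp add: algebra_simps)
  qed
  show "c * dt (du m l) (m 0) \<ge> 0" using S by simp
  assume l2: "2 \<le> l"
  have Q1: "Qd (dir 1)" using Q l2 by simp
  have G: "c * dt (dir 1) (dir i) > 0 \<and> c * dt (dir 1) (du m i) > 0" if "2 \<le> i" "i \<le> l" for i
    using that
  proof (induction i rule: dec_induct)
    case base
    have a: "c * dt (dir 1) (dir 2) > 0" using K2[of 1] l2 by (simp add: numeral_2_eq_2)
    have "du m 1 = (int (jj 1) * fst (dir 1), int (jj 1) * snd (dir 1))" using dust[of 1] l2 du0 by simp
    then have "du m 2 = (int (jj 1) * fst (dir 1) + int (jj 2) * fst (dir 2), int (jj 1) * snd (dir 1) + int (jj 2) * snd (dir 2))"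
      using dust[of 2] l2 by simp
    then have "dt (dir 1) (du m 2) = int (jj 2) * dt (dir 1) (dir 2)" by (simp add: dt_def algebra_simps)
    then have e: "c * dt (dir 1) (du m 2) = int (jj 2) * (c * dt (dir 1) (dir 2))" by (simp add: algebra_simps)
    have "int (jj 2) > 0" using jpos[of 2] l2 by simp
    then have "int (jj 2) * (c * dt (dir 1) (dir 2)) > 0" using a by (rule mult_pos_pos)
    then have "c * dt (dir 1) (du m 2) > 0" by (subst e)
    then show ?case using a by simp
  next
    case (step i)
    have "c * dt (dir i) (dir (Suc i)) > 0" using K2[of i] step by simp
    then have a: "c * dt (dir 1) (dir (Suc i)) > 0"
      using T2[OF c Q1 _ _ conjunct1[OF step.IH]] Q[of i] Q[of "Suc i"] step by simp
    have "dt (dir 1) (du m (Suc i)) = dt (dir 1) (du m i) + int (jj (Suc i)) * dt (dir 1) (dir (Suc i))"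
      using dust[of "Suc i"] step by (simp add: dt_def algebra_simps)
    then have "c * dt (dir 1) (du m (Suc i)) = c * dt (dir 1) (du m i) + int (jj (Suc i)) * (c * dt (dir 1) (dir (Suc i)))"
      by (simp add: algebra_simps)
    moreover have "int (jj (Suc i)) * (c * dt (dir 1) (dir (Suc i))) \<ge> 0" using a by simp
    moreover have "c * dt (dir 1) (du m i) > 0" using step.IH step.prems by simp
    ultimately show ?case using a by linarith
  qed
  have M: "fst (dir 1) \<le> fst (du m i) \<and> snd (dir 1) \<le> snd (du m i)" if "1 \<le> i" "i \<le> l" for i
    using that
  proof (induction i rule: dec_induct)
    case base
    have "du m 1 = (int (jj 1) * fst (dir 1), int (jj 1) * snd (dir 1))" using dust[of 1] base du0 by simp
    moreover have "int (jj 1) \<ge> 1" using jpos[of 1] base by simp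
    moreover have "fst (dir 1) \<ge> 0" "snd (dir 1) \<ge> 0" using Q1 by (auto simp: Qd_def)
    ultimately show ?case by (simp add: mult_le_cancel_right1)
  next
    case (step i)
    have "Qd (dir (Suc i))" using Q step by simp
    then have "int (jj (Suc i)) * fst (dir (Suc i)) \<ge> 0" "int (jj (Suc i)) * snd (dir (Suc i)) \<ge> 0"
      by (auto simp: Qd_def)
    then show ?case using dust[of "Suc i"] step by (simp add: Qd_def)
  qed
  show "c * dt (dir 1) (du m l) > 0 \<and> fst (dir 1) \<le> fst (du m l) \<and> snd (dir 1) \<le> snd (du m l)"
    using G[of l] M[of l] l2 by simp
qed



lemma bend_step:
  fixes F :: "'k::comm_ring_1 ser" and c c' :: "pexp \<Rightarrow> 'k"
  assumes g: "good F d" and d: "fst d \<ge> 0" "snd d \<ge> 0" "d \<noteq> (0,0)"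
   and c': "c' = ps_mult c (\<lambda>\<alpha>. ser_pow F n \<alpha> (vsub m' m))"
   and nz: "c' \<noteq> (\<lambda>_. 0)" and ne: "\<not> (c' = c \<and> m' = m)"
   and cinf: "\<And>\<alpha>. \<not> finite {\<beta>::pexp. \<forall>q. \<beta> q \<le> \<alpha> q} \<Longrightarrow> c \<alpha> = 0"
  shows "\<exists>j::nat. j \<ge> 1 \<and> m' = (fst m + int j * fst d, snd m + int j * snd d)"
proof -
  obtain \<alpha> where a: "c' \<alpha> \<noteq> 0" using nz by auto
  have "\<exists>\<beta>. ser_pow F n \<beta> (vsub m' m) \<noteq> 0"
  proof (rule ccontr)
    assume "\<not> ?thesis"
    then have "\<And>\<beta>. ser_pow F n \<beta> (vsub m' m) = 0" by blast
    then have "c' \<alpha> = 0" unfolding c' ps_mult_def by simp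
    then show False using a by simp
  qed
  then obtain \<beta> where "ser_pow F n \<beta> (vsub m' m) \<noteq> 0" by blast
  then obtain j :: nat where vj: "vsub m' m = (int j * fst d, int j * snd d)"
    using ser_pow_good(1)[OF g d] by blast
  have m': "m' = (fst m + int j * fst d, snd m + int j * snd d)"
    using vj by (cases m; cases m') (simp add: vsub_def)
  have "j \<noteq> 0"
  proof
    assume j0: "j = 0"
    then have mm: "m' = m" using m' by simp
    have v0: "vsub m' m = (0,0)" using vj j0 by simp
    have "c' = c"
    proof
      fix \<alpha>
      show "c' \<alpha> = c \<alpha>"
      proof (cases "finite {\<beta>::pexp. \<forall>q. \<beta> q \<le> \<alpha> q}")
        case True
        have "(\<lambda>\<alpha>. ser_pow F n \<alpha> (vsub m' m)) = ps_one"
          unfolding v0 using ser_pow_good(2)[OF g d] by blast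
        then show ?thesis unfolding c' using ps_mult_one_right[OF True] by simp
      next
        case False
        then show ?thesis unfolding c' using ps_mult_inf cinf by metis
      qed
    qed
    then show False using ne mm by simp
  qed
  then show ?thesis using m' by (intro exI[of _ j]) simp
qed

lemma good_P1: "good (P1 l1 :: 'k::comm_ring_1 ser) (1,0)"
proof -
  have f: "finite {m. (P1 l1 :: 'k ser) \<beta> m \<noteq> 0}" for \<beta>
  proof -
    have "{m. (P1 l1 :: 'k ser) \<beta> m \<noteq> 0} \<subseteq> insert (0,0) ((\<lambda>j. (int j, 0)) ` {1..l1})"
      by (auto simp: P1_def split: if_splits)
    then show ?thesis by (rule finite_subset) simp
  qed
  have s: "\<exists>j::nat. m = (int j * fst (1::int,0::int), int j * snd (1::int,0::int))" if "(P1 l1 :: 'k ser) \<beta> m \<noteq> 0" for \<beta> m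
  proof -
    have "m = (0,0) \<or> (\<exists>j. m = (int j, 0))" using that by (auto simp: P1_def split: if_splits)
    then show ?thesis by (metis fst_conv mult.right_neutral mult_zero_right of_nat_0 snd_conv)
  qed
  have z: "(P1 l1 :: 'k ser) \<alpha> (0,0) = ps_one \<alpha>" for \<alpha>
    by (auto simp: P1_def ps_one_def)
  show ?thesis unfolding good_def using f s z by blast
qed

lemma good_P2: "good (P2 l2 :: 'k::comm_ring_1 ser) (0,1)"
proof -
  have f: "finite {m. (P2 l2 :: 'k ser) \<beta> m \<noteq> 0}" for \<beta>
  proof -
    have "{m. (P2 l2 :: 'k ser) \<beta> m \<noteq> 0} \<subseteq> insert (0,0) ((\<lambda>j. (0, int j)) ` {1..l2})"
      by (auto simp: P2_def split: if_splits)
    then show ?thesis by (rule finite_subset) simp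
  qed
  have s: "\<exists>j::nat. m = (int j * fst (0::int,1::int), int j * snd (0::int,1::int))" if "(P2 l2 :: 'k ser) \<beta> m \<noteq> 0" for \<beta> m
  proof -
    have "m = (0,0) \<or> (\<exists>j. m = (0, int j))" using that by (auto simp: P2_def split: if_splits)
    then show ?thesis by (metis fst_conv mult.right_neutral mult_zero_right of_nat_0 snd_conv)
  qed
  have z: "(P2 l2 :: 'k ser) \<alpha> (0,0) = ps_one \<alpha>" for \<alpha>
    by (auto simp: P2_def ps_one_def)
  show ?thesis unfolding good_def using f s z by blast
qed

lemma good_wall:
  fixes f :: "int \<times> int \<Rightarrow> 'k::comm_ring_1 ser"
  assumes "is_scat l1 l2 f" "w \<in> walls"
  shows "good (wall_fun l1 l2 f w) (wall_dir w)"
    and "fst (wall_dir w) \<ge> 0" "snd (wall_dir w) \<ge> 0" "wall_dir w \<noteq> (0,0)"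
proof -
  consider "w = XAxis" | "w = YAxis" | v where "w = Ray v" "v \<in> raydirs"
    using assms(2) unfolding walls_def by auto
  then have "good (wall_fun l1 l2 f w) (wall_dir w) \<and> fst (wall_dir w) \<ge> 0 \<and> snd (wall_dir w) \<ge> 0 \<and> wall_dir w \<noteq> (0,0)"
  proof cases
    case 1
    then show ?thesis using good_P1 by (simp add: wall_fun_def wall_dir_def)
  next
    case 2
    then show ?thesis using good_P2 by (simp add: wall_fun_def wall_dir_def)
  next
    case (3 v)
    have "is_wall_fun l1 l2 v (f v)" using assms(1) 3 unfolding is_scat_def by blast
    then have "good (f v) v" unfolding is_wall_fun_def good_def is_elem_def ps_one_def by auto
    moreover have "fst v > 0" "snd v > 0" using 3 by (auto simp: raydirs_def)
    ultimately show ?thesis using 3 by (auto simp: wall_fun_def wall_dir_def)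
  qed
  then show "good (wall_fun l1 l2 f w) (wall_dir w)" "fst (wall_dir w) \<ge> 0" "snd (wall_dir w) \<ge> 0" "wall_dir w \<noteq> (0,0)"
    by auto
qed

lemma wall_point:
  assumes "w \<in> walls" "Q \<in> wall_set w" "Q \<noteq> (0,0)"
    "\<not> ((snd Q = 0 \<and> fst Q > 0) \<or> (fst Q = 0 \<and> snd Q > 0))"
  shows "\<exists>s>0. Q = (- s * real_of_int (fst (wall_dir w)), - s * real_of_int (snd (wall_dir w)))"
proof -
  consider "w = XAxis" | "w = YAxis" | v where "w = Ray v" "v \<in> raydirs"
    using assms(1) unfolding walls_def by auto
  then show ?thesis
  proof cases
    case 1
    then have "snd Q = 0" using assms(2) by (simp add: wall_set_def)
    moreover have "fst Q \<noteq> 0" using assms(3) calculation by (cases Q) auto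
    ultimately have "fst Q < 0" using assms(4) by auto
    then show ?thesis using \<open>snd Q = 0\<close> 1
      by (intro exI[of _ "- fst Q"]) (cases Q, simp add: wall_dir_def)
  next
    case 2
    then have "fst Q = 0" using assms(2) by (simp add: wall_set_def)
    moreover have "snd Q \<noteq> 0" using assms(3) calculation by (cases Q) auto
    ultimately have "snd Q < 0" using assms(4) by auto
    then show ?thesis using \<open>fst Q = 0\<close> 2
      by (intro exI[of _ "- snd Q"]) (cases Q, simp add: wall_dir_def)
  next
    case (3 v)
    then obtain t where t: "Q = (- t * real_of_int (fst v), - t * real_of_int (snd v))" "0 \<le> t"
      using assms(2) by (auto simp: wall_set_def)
    have "t \<noteq> 0" using t assms(3) by auto
    then show ?thesis using t 3 by (intro exI[of _ t]) (simp add: wall_dir_def)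
  qed
qed



lemma arith1:
  fixes p q A B K D1 D2 :: int
  assumes "p \<ge> 0" "q \<ge> 0" "K \<ge> 1" "B > 0" "D2 > 0"
    and h1: "p * (K * B) - q * (K * A) > 0"
    and h2: "p * (- D2) - q * (- D1) > 0"
    and h3: "q \<le> K * B"
    and h4: "D1 * (K * B^2) \<le> (K * A * B + 1) * D2"
  shows False
proof -
  have "K * (p * B - q * A) > 0" using h1 by (simp add: algebra_simps)
  then have D: "p * B - q * A \<ge> 1" using assms(3) by (simp add: zero_less_mult_iff)
  have kb: "K * B^2 > 0" using assms by simp
  have "p * D2 < q * D1" using h2 by simp
  then have s1: "(p * D2) * (K * B^2) < (q * D1) * (K * B^2)" using kb by (rule mult_strict_right_mono)
  have s2: "q * (D1 * (K * B^2)) \<le> q * ((K * A * B + 1) * D2)" using h4 assms(2) by (rule mult_left_mono)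
  have "D2 * (p * K * B^2 - q * K * A * B - q) < 0" using s1 s2 by (simp add: algebra_simps power2_eq_square)
  then have "p * K * B^2 - q * K * A * B - q < 0" using assms(5) by (simp add: mult_less_0_iff)
  then have e: "K * B * (p * B - q * A) < q" by (simp add: algebra_simps power2_eq_square)
  have "K * B * (p * B - q * A) \<ge> K * B * 1" using D assms by (intro mult_left_mono) auto
  then show False using e h3 by simp
qed

lemma arith2:
  fixes p q A B K D1 D2 :: int
  assumes "p \<ge> 0" "q \<ge> 0" "K \<ge> 1" "A \<ge> 0" "D2 > 0" "B \<ge> 0"
    and h1: "- (p * (K * B) - q * (K * A)) > 0"
    and h2: "- (p * (- D2) - q * (- D1)) > 0"
    and h3: "p \<le> K * A"
    and h4: "K * A^2 * D2 \<le> D1 * (K * A * B + 1)"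
  shows False
proof -
  have "K * (q * A - p * B) > 0" using h1 by (simp add: algebra_simps)
  then have E: "q * A - p * B \<ge> 1" using assms(3) by (simp add: zero_less_mult_iff)
  have kp: "K * A * B + 1 > 0" using assms by simp
  have "q * D1 < p * D2" using h2 by simp
  then have s1: "(q * D1) * (K * A * B + 1) < (p * D2) * (K * A * B + 1)" using kp by (rule mult_strict_right_mono)
  have s2: "q * (K * A^2 * D2) \<le> q * (D1 * (K * A * B + 1))" using h4 assms(2) by (rule mult_left_mono)
  have "D2 * (q * K * A^2 - p * K * A * B - p) < 0" using s1 s2 by (simp add: algebra_simps power2_eq_square)
  then have "q * K * A^2 - p * K * A * B - p < 0" using assms(5) by (simp add: mult_less_0_iff)
  then have e: "K * A * (q * A - p * B) < p" by (simp add: algebra_simps power2_eq_square)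
  have "K * A * (q * A - p * B) \<ge> K * A * 1" using E assms by (intro mult_left_mono) auto
  then show False using e h3 by simp
qed

lemma fr_le: "(0::real) < y \<Longrightarrow> 0 < w \<Longrightarrow> x / y \<le> z / w \<longleftrightarrow> x * w \<le> z * y"
  by (simp add: field_simps)
lemma fr_lt: "(0::real) < y \<Longrightarrow> 0 < w \<Longrightarrow> x / y < z / w \<longleftrightarrow> x * w < z * y"
  by (simp add: field_simps)

lemma final_arith:
  fixes p q c :: int and d1 d2 a b k l :: nat
  assumes "1 \<le> k" "0 < b" "0 < d2" "p \<ge> 0" "q \<ge> 0" "c = 1 \<or> c = -1"
    and H: "(real d1 / real d2 \<le> real (k * a * b + 1) / real (k * b ^ 2)
            \<and> real a / real b < real d1 / real d2)
         \<or> (real (k * a ^ 2) / real (k * a * b + 1) \<le> real d1 / real d2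
            \<and> real d1 / real d2 < real a / real b)"
    and G1: "c * dt (int k * int a, int k * int b) (- int d1, - int d2) \<ge> 0"
    and G2: "2 \<le> l \<Longrightarrow> c * dt (p, q) (int k * int a, int k * int b) > 0 \<and> p \<le> int k * int a \<and> q \<le> int k * int b"
    and K1: "c * dt (p, q) (- int d1, - int d2) > 0"
  shows "l < 2"
proof (rule ccontr)
  assume "\<not> l < 2"
  then have l2: "2 \<le> l" by simp
  have pd2: "(0::real) < real d2" using assms by simp
  have pb: "(0::real) < real b" using assms by simp
  from H show False
  proof
    assume h: "real d1 / real d2 \<le> real (k * a * b + 1) / real (k * b ^ 2) \<and> real a / real b < real d1 / real d2"
    have pk: "(0::real) < real (k * b^2)" using assms by simp
    have "real d1 * real (k * b^2) \<le> real (k * a * b + 1) * real d2" using h fr_le[OF pd2 pk] by blast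
    then have "d1 * (k * b^2) \<le> (k * a * b + 1) * d2" by (simp only: of_nat_mult[symmetric] of_nat_le_iff)
    then have i1: "int d1 * (int k * int b^2) \<le> (int k * int a * int b + 1) * int d2"
      by (metis (mono_tags) of_nat_1 of_nat_add of_nat_le_iff of_nat_mult of_nat_power)
    have "real a * real d2 < real d1 * real b" using h fr_lt[OF pb pd2] by blast
    then have "a * d2 < d1 * b" by (simp only: of_nat_mult[symmetric] of_nat_less_iff)
    then have i2: "int a * int d2 < int d1 * int b" by (metis of_nat_less_iff of_nat_mult)
    have "dt (int k * int a, int k * int b) (- int d1, - int d2) = int k * (int d1 * int b - int a * int d2)"
      by (simp add: dt_def algebra_simps)
    moreover have "int k * (int d1 * int b - int a * int d2) > 0" using i2 assms by simp
    ultimately have c1: "c = 1" using G1 assms(6) by auto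
    show False
      using arith1[of p q "int k" "int b" "int d2" "int a" "int d1"] G2[OF l2] K1 c1 i1 assms
      by (simp add: dt_def)
  next
    assume h: "real (k * a ^ 2) / real (k * a * b + 1) \<le> real d1 / real d2 \<and> real d1 / real d2 < real a / real b"
    have pk: "(0::real) < real (k * a * b + 1)" by (simp only: of_nat_0_less_iff)
    have "real (k * a ^ 2) * real d2 \<le> real d1 * real (k * a * b + 1)" using h fr_le[OF pk pd2] by blast
    then have "(k * a ^ 2) * d2 \<le> d1 * (k * a * b + 1)" by (simp only: of_nat_mult[symmetric] of_nat_le_iff)
    then have i1: "int k * int a^2 * int d2 \<le> int d1 * (int k * int a * int b + 1)"
      by (metis (mono_tags) of_nat_1 of_nat_add of_nat_le_iff of_nat_mult of_nat_power)
    have "real d1 * real b < real a * real d2" using h fr_lt[OF pd2 pb] by blast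
    then have "d1 * b < a * d2" by (simp only: of_nat_mult[symmetric] of_nat_less_iff)
    then have i2: "int d1 * int b < int a * int d2" by (metis of_nat_less_iff of_nat_mult)
    have "dt (int k * int a, int k * int b) (- int d1, - int d2) = int k * (int d1 * int b - int a * int d2)"
      by (simp add: dt_def algebra_simps)
    moreover have "int k * (int d1 * int b - int a * int d2) < 0" using i2 assms by (simp add: mult_less_0_iff)
    ultimately have c1: "c = -1" using G1 assms(6) by auto
    show False
      using arith2[of p q "int k" "int a" "int d2" "int b" "int d1"] G2[OF l2] K1 c1 i1 assms
      by (simp add: dt_def)
  qed
qed



lemma pairing_dt: "pairing (wall_normal w) m = dt (wall_dir w) m"
  by (simp add: pairing_def wall_normal_def dt_def algebra_simps)

theorem lemma5p11:
  fixes l1 l2 :: nat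
    and f :: "int \<times> int \<Rightarrow> 'k::field_char_0 ser"
    and d1 d2 a b k :: nat
  assumes "1 \<le> l1" and "1 \<le> l2"
    and "is_scat l1 l2 f"
    and "coprime a b" and "1 \<le> k" and "0 < b" and "0 < d2"
    and "(real d1 / real d2 \<le> real (k * a * b + 1) / real (k * b ^ 2)
            \<and> real a / real b < real d1 / real d2)
         \<or> (real (k * a ^ 2) / real (k * a * b + 1) \<le> real d1 / real d2
            \<and> real d1 / real d2 < real a / real b)"
  shows "one_bending l1 l2 f d1 d2 a b k"
  unfolding one_bending_def
proof (intro allI impI)
  fix \<beta> l \<tau> ms cs
  assume H: "broken_line l1 l2 f \<beta> l \<tau> ms cs \<and>
        ms 0 = (- int d1, - int d2) \<and>
        ms l = (int k * int a - int d1, int k * int b - int d2) \<and>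
        (\<forall>i. 1 \<le> i \<and> i \<le> l \<longrightarrow>
           \<not> ((snd (\<beta> (\<tau> i)) = 0 \<and> fst (\<beta> (\<tau> i)) > 0) \<or> (fst (\<beta> (\<tau> i)) = 0 \<and> snd (\<beta> (\<tau> i)) > 0)))"
  have BL: "broken_line l1 l2 f \<beta> l \<tau> ms cs" using H by blast
  have m0: "ms 0 = (- int d1, - int d2)" using H by blast
  have ml: "ms l = (int k * int a - int d1, int k * int b - int d2)" using H by blast
  have ax: "\<And>i. 1 \<le> i \<Longrightarrow> i \<le> l \<Longrightarrow>
      \<not> ((snd (\<beta> (\<tau> i)) = 0 \<and> fst (\<beta> (\<tau> i)) > 0) \<or> (fst (\<beta> (\<tau> i)) = 0 \<and> snd (\<beta> (\<tau> i)) > 0))"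
    using H by blast
  have tinc: "\<And>i. 1 \<le> i \<Longrightarrow> i < l \<Longrightarrow> \<tau> i < \<tau> (Suc i)" using BL unfolding broken_line_def by blast
  have tneg: "1 \<le> l \<Longrightarrow> \<tau> l < 0" using BL unfolding broken_line_def by blast
  have cs0: "cs 0 = ps_one" using BL unfolding broken_line_def by blast
  have nobad: "\<And>t. t \<le> 0 \<Longrightarrow> \<beta> t \<notin> bad_points" using BL unfolding broken_line_def by blast
  have aff: "\<And>i t s. i \<le> l \<Longrightarrow> t \<le> (if i = l then 0 else \<tau> (Suc i)) \<Longrightarrow> s \<le> (if i = l then 0 else \<tau> (Suc i))
         \<Longrightarrow> (i = 0 \<or> (\<tau> i \<le> t \<and> \<tau> i \<le> s)) \<Longrightarrow> \<beta> t - \<beta> s = (s - t) *\<^sub>R rvec (ms i)"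
    using BL unfolding broken_line_def by blast
  define BP where "BP i w \<longleftrightarrow> \<beta> (\<tau> i) \<in> wall_set w \<and> pairing (wall_normal w) (ms (i - 1)) \<noteq> 0 \<and>
           cs i = ps_mult (cs (i - 1))
                   (\<lambda>\<alpha>. ser_pow (wall_fun l1 l2 f w) (nat \<bar>pairing (wall_normal w) (ms (i - 1))\<bar>)
                          \<alpha> (vsub (ms i) (ms (i - 1)))) \<and>
           cs i \<noteq> (\<lambda>_. 0) \<and>
           \<not> (cs i = cs (i - 1) \<and> ms i = ms (i - 1))" for i w
  have bend: "\<forall>i. \<exists>w. 1 \<le> i \<and> i \<le> l \<longrightarrow> w \<in> walls \<and> BP i w"
    using BL unfolding broken_line_def BP_def by blast
  then obtain W where W: "\<And>i. 1 \<le> i \<Longrightarrow> i \<le> l \<Longrightarrow> W i \<in> walls \<and> BP i (W i)"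
    using choice[OF bend] by blast
  have lpos: "1 \<le> l"
  proof (rule ccontr)
    assume "\<not> 1 \<le> l"
    then have "l = 0" by simp
    then have "int k * int b = 0" using m0 ml by simp
    then show False using assms by simp
  qed
  have tle: "\<tau> i \<le> \<tau> l" if i: "1 \<le> i" "i \<le> l" for i
    using i(2)
  proof (induction rule: inc_induct)
    case base
    then show ?case by simp
  next
    case (step n)
    have "\<tau> n < \<tau> (Suc n)" using tinc[of n] step i by simp
    then show ?case using step.IH by linarith
  qed
  have tneg': "\<tau> i < 0" if "1 \<le> i" "i \<le> l" for i
    using tle[OF that] tneg lpos by linarith
  define dir where "dir i = wall_dir (W i)" for i
  have Wg: "good (wall_fun l1 l2 f (W i)) (dir i) \<and> fst (dir i) \<ge> 0 \<and> snd (dir i) \<ge> 0 \<and> dir i \<noteq> (0,0)"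
    if "1 \<le> i" "i \<le> l" for i
    using good_wall[OF assms(3), of "W i"] W[OF that] unfolding dir_def by blast
  have jex: "\<exists>j::nat. 1 \<le> i \<and> i \<le> l \<longrightarrow> j \<ge> 1 \<and> ms i = (fst (ms (i-1)) + int j * fst (dir i), snd (ms (i-1)) + int j * snd (dir i))" for i
  proof (cases "1 \<le> i \<and> i \<le> l")
    case True
    then have i: "1 \<le> i" "i \<le> l" by auto
    have bp: "BP i (W i)" using W[OF i] by blast
    have cinf: "cs (i-1) \<alpha> = 0" if "\<not> finite {\<beta>::pexp. \<forall>q. \<beta> q \<le> \<alpha> q}" for \<alpha>
    proof (cases "i - 1 = 0")
      case True
      then show ?thesis using cs0 ps_one_inf[OF that] by simp
    next
      case False
      then have "1 \<le> i - 1" "i - 1 \<le> l" using i by auto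
      then have "BP (i-1) (W (i-1))" using W by blast
      then show ?thesis unfolding BP_def using ps_mult_inf[OF that] by metis
    qed
    have g: "good (wall_fun l1 l2 f (W i)) (dir i)" "fst (dir i) \<ge> 0" "snd (dir i) \<ge> 0" "dir i \<noteq> (0,0)"
      using Wg[OF i] by auto
    have "\<exists>j::nat. j \<ge> 1 \<and> ms i = (fst (ms (i-1)) + int j * fst (dir i), snd (ms (i-1)) + int j * snd (dir i))"
      apply (rule bend_step[where F="wall_fun l1 l2 f (W i)" and d="dir i" and c="cs (i-1)" and c'="cs i"
            and n="nat \<bar>pairing (wall_normal (W i)) (ms (i - 1))\<bar>" and m'="ms i" and m="ms (i-1)"])
      using g bp cinf unfolding BP_def dir_def by auto
    then show ?thesis by blast
  qed blast
  obtain jj where jj: "\<And>i. 1 \<le> i \<Longrightarrow> i \<le> l \<Longrightarrow> jj i \<ge> 1 \<and> ms i = (fst (ms (i-1)) + int (jj i) * fst (dir i), snd (ms (i-1)) + int (jj i) * snd (dir i))"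
  proof -
    have "\<forall>i. \<exists>j::nat. 1 \<le> i \<and> i \<le> l \<longrightarrow> j \<ge> 1 \<and> ms i = (fst (ms (i-1)) + int j * fst (dir i), snd (ms (i-1)) + int j * snd (dir i))"
      using jex by blast
    from choice[OF this] show ?thesis using that by blast
  qed
  have sex: "\<exists>s. 1 \<le> i \<and> i \<le> l \<longrightarrow> s > 0 \<and> \<beta> (\<tau> i) = (- s * of_int (fst (dir i)), - s * of_int (snd (dir i)))" for i
  proof (cases "1 \<le> i \<and> i \<le> l")
    case True
    then have i: "1 \<le> i" "i \<le> l" by auto
    have "\<beta> (\<tau> i) \<notin> bad_points" using nobad tneg'[OF i] by simp
    then have nz: "\<beta> (\<tau> i) \<noteq> (0,0)" unfolding bad_points_def by blast
    have "\<beta> (\<tau> i) \<in> wall_set (W i)" "W i \<in> walls" using W[OF i] unfolding BP_def by auto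
    then show ?thesis using wall_point[OF _ _ nz ax[OF i]] unfolding dir_def by blast
  qed blast
  obtain s where s: "\<And>i. 1 \<le> i \<Longrightarrow> i \<le> l \<Longrightarrow> s i > 0 \<and> \<beta> (\<tau> i) = (- s i * of_int (fst (dir i)), - s i * of_int (snd (dir i)))"
  proof -
    have "\<forall>i. \<exists>s. 1 \<le> i \<and> i \<le> l \<longrightarrow> s > 0 \<and> \<beta> (\<tau> i) = (- s * of_int (fst (dir i)), - s * of_int (snd (dir i)))"
      using sex by blast
    from choice[OF this] show ?thesis using that by blast
  qed
  have tr2: "\<beta> (\<tau> (Suc i)) - \<beta> (\<tau> i) = (\<tau> i - \<tau> (Suc i)) *\<^sub>R rvec (ms i)" if "1 \<le> i" "i < l" for i
  proof -
    have "\<tau> i < \<tau> (Suc i)" using tinc that by blast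
    then show ?thesis using aff[of i "\<tau> (Suc i)" "\<tau> i"] that by simp
  qed
  have nz1: "dt (dir 1) (ms 0) \<noteq> 0"
    using W[of 1] lpos unfolding BP_def dir_def by (simp add: pairing_dt)
  define c :: int where "c = (if dt (dir 1) (ms 0) > 0 then 1 else -1)"
  have c1: "c = 1 \<or> c = -1" unfolding c_def by simp
  have c2: "c * dt (dir 1) (ms 0) > 0" unfolding c_def using nz1 by auto
  note CS = core_sign[where l=l and dir=dir and m=ms and jj=jj and s=s and \<tau>=\<tau> and P="\<lambda>i. \<beta> (\<tau> i)" and c=c]
  have K1: "\<And>i. 1 \<le> i \<Longrightarrow> i \<le> l \<Longrightarrow> c * dt (dir i) (ms (i-1)) > 0"
    using CS(1)[OF _ _ _ tinc tr2 c2] s jj by blast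
  have K2: "\<And>i. 1 \<le> i \<Longrightarrow> i < l \<Longrightarrow> c * dt (dir i) (dir (Suc i)) > 0"
    using CS(2)[OF _ _ _ tinc tr2 c2] s jj by blast
  have Q: "\<And>i. 1 \<le> i \<Longrightarrow> i \<le> l \<Longrightarrow> Qd (dir i)" using Wg unfolding Qd_def by blast
  note CC = core_comb[where l=l and dir=dir and m=ms and jj=jj and c=c, OF c1 Q _ _ K1 K2]
  have G1: "c * dt (du ms l) (ms 0) \<ge> 0" using CC(1) jj by blast
  have G2: "2 \<le> l \<Longrightarrow> c * dt (dir 1) (du ms l) > 0 \<and> fst (dir 1) \<le> fst (du ms l) \<and> snd (dir 1) \<le> snd (du ms l)"
    using CC(2) jj by blast
  have dul: "du ms l = (int k * int a, int k * int b)" unfolding du_def using m0 ml by simp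
  have "l < 2"
  proof (rule final_arith[where p="fst (dir 1)" and q="snd (dir 1)" and c=c])
    show "1 \<le> k" "0 < b" "0 < d2" using assms by auto
    show "fst (dir 1) \<ge> 0" "snd (dir 1) \<ge> 0" using Wg[of 1] lpos by auto
    show "c = 1 \<or> c = -1" by (rule c1)
    show "(real d1 / real d2 \<le> real (k * a * b + 1) / real (k * b ^ 2)
            \<and> real a / real b < real d1 / real d2)
         \<or> (real (k * a ^ 2) / real (k * a * b + 1) \<le> real d1 / real d2
            \<and> real d1 / real d2 < real a / real b)" by (rule assms(8))
    show "c * dt (int k * int a, int k * int b) (- int d1, - int d2) \<ge> 0" using G1 dul m0 by simp
    show "2 \<le> l \<Longrightarrow> c * dt (fst (dir 1), snd (dir 1)) (int k * int a, int k * int b) > 0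
        \<and> fst (dir 1) \<le> int k * int a \<and> snd (dir 1) \<le> int k * int b"
      using G2 dul by simp
    show "c * dt (fst (dir 1), snd (dir 1)) (- int d1, - int d2) > 0" using c2 m0 by simp
  qed
  then show "l = 1" using lpos by simp
qed

end
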